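(* Let $\mathfrak p$ be a prime ideal of $R$ and $\kappa(\mathfrak p)=R_{\mathfrak p}/\mathfrak pR_{\mathfrak p}$. The following are equivalent: (i) $\kappa(\mathfrak p)$ is simple-$\mathcal F$-torsion-free as an $R$-module; (ii) $\kappa(\mathfrak p)$ is simple-$\mathcal F$-divisible as an $R$-module; (iii) $\mathfrak p\in\mathcal F^*$.
   Context: Throughout, $R$ is a commutative Noetherian local ring with maximal ideal $\mathfrak m$, and $\mathcal F$ is a Gabriel topology on $R$: a nonempty set of ideals of $R$ such that (1) if $\mathfrak a\in\mathcal F$ and $\mathfrak a\subseteq\mathfrak b$ then $\mathfrak b\in\mathcal F$; (2) if $\mathfrak a,\mathfrak b\in\mathcal F$ then $\mathfrak a\cap\mathfrak b\in\mathcal F$; (3) if $\mathfrak b$ is an ideal and there is $\mathfrak a\in\mathcal F$ with $(\mathfrak b:r)\in\mathcal F$ for all $r\in\mathfrak a$, then $\mathfrak b\in\mathcal F$. For an $R$-module $X$ and ideal $\mathfrak a$, $X[\mathfrak a]=\{x\in X:\mathfrak a x=0\}$. $X$ is $\mathcal F$-torsion-free if $X[\mathfrak a]=0$ for all $\mathfrak a\in\mathcal F$, and $\mathcal F$-divisible if $\mathfrak aX=X$ for all $\mathfrak a\in\mathcal F$. $M$ is simple-$\mathcal F$-torsion-free if $M\neq0$, $M$ is $\mathcal F$-torsion-free, and for every submodule $0\neq U\subsetneq M$, $M/U$ is not $\mathcal F$-torsion-free; $N$ is simple-$\mathcal F$-divisible if $N\ne0$, $N$ is $\mathcal F$-divisible,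 and no submodule $0\neq V\subsetneq N$ is $\mathcal F$-divisible. $\mathcal F^*$ denotes the set of maximal elements (under inclusion) of $\mathrm{Spec}(R)\setminus\mathcal F$. *)

theory Defs
  imports Main
begin

section \<open>Ideals of a commutative ring (the ring is the whole type 'a)\<close>

definition is_ideal :: "'a::comm_ring_1 set \<Rightarrow> bool" where
  "is_ideal I \<longleftrightarrow> 0 \<in> I \<and> (\<forall>x\<in>I. \<forall>y\<in>I. x + y \<in> I) \<and> (\<forall>r. \<forall>x\<in>I. r * x \<in> I)"

definition ideal_gen :: "'a::comm_ring_1 set \<Rightarrow> 'a set" where
  "ideal_gen S = \<Inter>{I. is_ideal I \<and> S \<subseteq> I}"

definition is_prime_ideal :: "'a::comm_ring_1 set \<Rightarrow> bool" where
  "is_prime_ideal P \<longleftrightarrow> is_ideal P \<and> P \<noteq> UNIV \<and> (\<forall>a b. a * b \<in> P \<longrightarrow> a \<in> P \<or> b \<in> P)"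

definition is_maximal_ideal :: "'a::comm_ring_1 set \<Rightarrow> bool" where
  "is_maximal_ideal M \<longleftrightarrow> is_ideal M \<and> M \<noteq> UNIV \<and>
     (\<forall>J. is_ideal J \<and> M \<subseteq> J \<and> J \<noteq> UNIV \<longrightarrow> J = M)"

definition noetherian_ring :: "'a::comm_ring_1 itself \<Rightarrow> bool" where
  "noetherian_ring _ \<longleftrightarrow> (\<forall>I::'a set. is_ideal I \<longrightarrow> (\<exists>S. finite S \<and> I = ideal_gen S))"

definition local_ring :: "'a::comm_ring_1 itself \<Rightarrow> bool" where
  "local_ring _ \<longleftrightarrow> (\<exists>!M::'a set. is_maximal_ideal M)"

definition colon_ideal :: "'a::comm_ring_1 set \<Rightarrow> 'a \<Rightarrow> 'a set" where
  "colon_ideal b r = {x. x * r \<in> b}"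

definition gabriel_topology :: "'a::comm_ring_1 set set \<Rightarrow> bool" where
  "gabriel_topology F \<longleftrightarrow> F \<noteq> {} \<and> (\<forall>a\<in>F. is_ideal a) \<and>
     (\<forall>a b. a \<in> F \<and> is_ideal b \<and> a \<subseteq> b \<longrightarrow> b \<in> F) \<and>
     (\<forall>a\<in>F. \<forall>b\<in>F. a \<inter> b \<in> F) \<and>
     (\<forall>b. is_ideal b \<and> (\<exists>a\<in>F. \<forall>r\<in>a. colon_ideal b r \<in> F) \<longrightarrow> b \<in> F)"

definition F_star :: "'a::comm_ring_1 set set \<Rightarrow> 'a set set" where
  "F_star F = {P. is_prime_ideal P \<and> P \<notin> F \<and>
     (\<forall>Q. is_prime_ideal Q \<and> Q \<notin> F \<and> P \<subseteq> Q \<longrightarrow> Q = P)}"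

definition is_submodule ::
  "'m set \<Rightarrow> ('m \<Rightarrow> 'm \<Rightarrow> 'm) \<Rightarrow> 'm \<Rightarrow> ('a::comm_ring_1 \<Rightarrow> 'm \<Rightarrow> 'm) \<Rightarrow> 'm set \<Rightarrow> bool" where
  "is_submodule M add z sm U \<longleftrightarrow> U \<subseteq> M \<and> z \<in> U \<and>
     (\<forall>x\<in>U. \<forall>y\<in>U. add x y \<in> U) \<and> (\<forall>r. \<forall>x\<in>U. sm r x \<in> U)"

definition quot_carrier :: "'m set \<Rightarrow> ('m \<Rightarrow> 'm \<Rightarrow> 'm) \<Rightarrow> 'm set \<Rightarrow> 'm set set" where
  "quot_carrier M add U = (\<lambda>x. {add x u | u. u \<in> U}) ` M"

definition quot_add :: "('m \<Rightarrow> 'm \<Rightarrow> 'm) \<Rightarrow> 'm set \<Rightarrow> 'm set \<Rightarrow> 'm set" where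
  "quot_add add C D = {add c d | c d. c \<in> C \<and> d \<in> D}"

definition quot_smult :: "('m \<Rightarrow> 'm \<Rightarrow> 'm) \<Rightarrow> ('a \<Rightarrow> 'm \<Rightarrow> 'm) \<Rightarrow> 'm set \<Rightarrow> 'a \<Rightarrow> 'm set \<Rightarrow> 'm set" where
  "quot_smult add sm U r C = {add (sm r c) u | c u. c \<in> C \<and> u \<in> U}"

definition annih_part :: "'m set \<Rightarrow> 'm \<Rightarrow> ('a \<Rightarrow> 'm \<Rightarrow> 'm) \<Rightarrow> 'a set \<Rightarrow> 'm set" where
  "annih_part M z sm a = {x \<in> M. \<forall>r\<in>a. sm r x = z}"

definition F_torsion_free ::
  "'a::comm_ring_1 set set \<Rightarrow> 'm set \<Rightarrow> 'm \<Rightarrow> ('a \<Rightarrow> 'm \<Rightarrow> 'm) \<Rightarrow> bool" where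
  "F_torsion_free F M z sm \<longleftrightarrow> (\<forall>a\<in>F. annih_part M z sm a = {z})"

definition ideal_times ::
  "'m set \<Rightarrow> ('m \<Rightarrow> 'm \<Rightarrow> 'm) \<Rightarrow> 'm \<Rightarrow> ('a::comm_ring_1 \<Rightarrow> 'm \<Rightarrow> 'm) \<Rightarrow> 'a set \<Rightarrow> 'm set \<Rightarrow> 'm set" where
  "ideal_times M add z sm a X =
     \<Inter>{V. is_submodule M add z sm V \<and> (\<forall>r\<in>a. \<forall>x\<in>X. sm r x \<in> V)}"

definition F_divisible ::
  "'a::comm_ring_1 set set \<Rightarrow> 'm set \<Rightarrow> ('m \<Rightarrow> 'm \<Rightarrow> 'm) \<Rightarrow> 'm \<Rightarrow> ('a \<Rightarrow> 'm \<Rightarrow> 'm) \<Rightarrow> 'm set \<Rightarrow> bool" where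
  "F_divisible F M add z sm X \<longleftrightarrow> (\<forall>a\<in>F. ideal_times M add z sm a X = X)"

definition simple_F_torsion_free ::
  "'a::comm_ring_1 set set \<Rightarrow> 'm set \<Rightarrow> ('m \<Rightarrow> 'm \<Rightarrow> 'm) \<Rightarrow> 'm \<Rightarrow> ('a \<Rightarrow> 'm \<Rightarrow> 'm) \<Rightarrow> bool" where
  "simple_F_torsion_free F M add z sm \<longleftrightarrow> M \<noteq> {z} \<and> F_torsion_free F M z sm \<and>
     (\<forall>U. is_submodule M add z sm U \<and> U \<noteq> {z} \<and> U \<noteq> M \<longrightarrow>
        \<not> F_torsion_free F (quot_carrier M add U) U (quot_smult add sm U))"

definition simple_F_divisible ::
  "'a::comm_ring_1 set set \<Rightarrow> 'm set \<Rightarrow> ('m \<Rightarrow> 'm \<Rightarrow> 'm) \<Rightarrow> 'm \<Rightarrow> ('a \<Rightarrow> 'm \<Rightarrow> 'm) \<Rightarrow> bool" where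
  "simple_F_divisible F N add z sm \<longleftrightarrow> N \<noteq> {z} \<and> F_divisible F N add z sm N \<and>
     (\<forall>V. is_submodule N add z sm V \<and> V \<noteq> {z} \<and> V \<noteq> N \<longrightarrow> \<not> F_divisible F N add z sm V)"

text \<open>Elements are classes of fractions a/s (s not in p) modulo a/s ~ b/t iff a t - b s in p.\<close>
definition kappa_rel :: "'a::comm_ring_1 set \<Rightarrow> (('a \<times> 'a) \<times> ('a \<times> 'a)) set" where
  "kappa_rel P = {((a, s), (b, t)). s \<notin> P \<and> t \<notin> P \<and> a * t - b * s \<in> P}"

definition kappa :: "'a::comm_ring_1 set \<Rightarrow> ('a \<times> 'a) set set" where
  "kappa P = (UNIV \<times> (- P)) // kappa_rel P"

definition kappa_add :: "'a::comm_ring_1 set \<Rightarrow> ('a \<times> 'a) set \<Rightarrow> ('a \<times> 'a) set \<Rightarrow> ('a \<times> 'a) set" where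
  "kappa_add P X Y = (\<Union>(a, s)\<in>X. \<Union>(b, t)\<in>Y. kappa_rel P `` {(a * t + b * s, s * t)})"

definition kappa_zero :: "'a::comm_ring_1 set \<Rightarrow> ('a \<times> 'a) set" where
  "kappa_zero P = kappa_rel P `` {(0, 1)}"

definition kappa_smult :: "'a::comm_ring_1 set \<Rightarrow> 'a \<Rightarrow> ('a \<times> 'a) set \<Rightarrow> ('a \<times> 'a) set" where
  "kappa_smult P r X = (\<Union>(a, s)\<in>X. kappa_rel P `` {(r * a, s)})"

end

theory Submission
  imports Defs
begin


lemma ideal_0: "is_ideal I \<Longrightarrow> 0 \<in> I" by (simp add: is_ideal_def)
lemma ideal_add: "is_ideal I \<Longrightarrow> x \<in> I \<Longrightarrow> y \<in> I \<Longrightarrow> x + y \<in> I" by (simp add: is_ideal_def)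
lemma ideal_mult: "is_ideal I \<Longrightarrow> x \<in> I \<Longrightarrow> r * x \<in> I" by (simp add: is_ideal_def)
lemma ideal_mult2: "is_ideal I \<Longrightarrow> x \<in> I \<Longrightarrow> x * r \<in> I"
  by (metis ideal_mult mult.commute)
lemma ideal_neg: "is_ideal I \<Longrightarrow> x \<in> I \<Longrightarrow> - x \<in> I"
  by (metis ideal_mult mult_minus1)
lemma ideal_diff: "is_ideal I \<Longrightarrow> x \<in> I \<Longrightarrow> y \<in> I \<Longrightarrow> x - y \<in> I"
  by (metis ideal_add ideal_neg diff_conv_add_uminus)
lemma ideal_UNIV: "is_ideal UNIV" by (simp add: is_ideal_def)

lemma prime_ideal: "is_prime_ideal P \<Longrightarrow> is_ideal P" by (simp add: is_prime_ideal_def)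
lemma prime_1: "is_prime_ideal P \<Longrightarrow> 1 \<notin> P"
  unfolding is_prime_ideal_def by (metis UNIV_eq_I ideal_mult mult.right_neutral)
lemma prime_mult: "is_prime_ideal P \<Longrightarrow> s \<notin> P \<Longrightarrow> t \<notin> P \<Longrightarrow> s * t \<notin> P"
  unfolding is_prime_ideal_def by blast

definition cls :: "'a::comm_ring_1 set \<Rightarrow> 'a \<Rightarrow> 'a \<Rightarrow> ('a \<times> 'a) set" where
  "cls P a s = kappa_rel P `` {(a, s)}"

lemma kappa_equiv:
  assumes "is_prime_ideal P" shows "equiv (UNIV \<times> (- P)) (kappa_rel P)"
proof (rule equivI)
  have I: "is_ideal P" using assms by (simp add: prime_ideal)
  show "refl_on (UNIV \<times> - P) (kappa_rel P)"
    unfolding refl_on_def kappa_rel_def using ideal_0[OF I] by auto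
  show "kappa_rel P \<subseteq> (UNIV \<times> - P) \<times> (UNIV \<times> - P)" by (auto simp: kappa_rel_def)
  show "sym (kappa_rel P)"
    unfolding sym_def kappa_rel_def
  proof (clarsimp)
    fix a s b t assume "a * t - b * s \<in> P"
    then have "- (a * t - b * s) \<in> P" using ideal_neg[OF I] by blast
    then show "b * s - a * t \<in> P" by (simp add: algebra_simps)
  qed
  show "trans (kappa_rel P)"
    unfolding trans_def kappa_rel_def
  proof (clarsimp)
    fix a s b t c u assume st: "s \<notin> P" "t \<notin> P" "u \<notin> P"
      and h1: "a * t - b * s \<in> P" and h2: "b * u - c * t \<in> P"
    have "u * (a * t - b * s) + s * (b * u - c * t) \<in> P"
      using h1 h2 I by (simp add: ideal_add ideal_mult)
    moreover have "u * (a * t - b * s) + s * (b * u - c * t) = t * (a * u - c * s)"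
      by (simp add: algebra_simps)
    ultimately have "t * (a * u - c * s) \<in> P" by simp
    then show "a * u - c * s \<in> P" using assms st unfolding is_prime_ideal_def by blast
  qed
qed

lemma cls_eq_iff:
  assumes "is_prime_ideal P" "s \<notin> P" "t \<notin> P"
  shows "cls P a s = cls P b t \<longleftrightarrow> a * t - b * s \<in> P"
proof -
  have "cls P a s = cls P b t \<longleftrightarrow> ((a,s),(b,t)) \<in> kappa_rel P"
    unfolding cls_def using eq_equiv_class_iff[OF kappa_equiv[OF assms(1)]] assms by auto
  then show ?thesis using assms unfolding kappa_rel_def by auto
qed

lemma cls_eqI:
  assumes "is_prime_ideal P" "s \<notin> P" "t \<notin> P" "a * t = b * s"
  shows "cls P a s = cls P b t"
  using assms cls_eq_iff[OF assms(1-3)] ideal_0[OF prime_ideal[OF assms(1)]] by simp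

lemma mem_cls: "(b, t) \<in> cls P a s \<longleftrightarrow> s \<notin> P \<and> t \<notin> P \<and> a * t - b * s \<in> P"
  unfolding cls_def kappa_rel_def by auto

lemma kappa_cases:
  assumes "X \<in> kappa P" obtains a s where "s \<notin> P" "X = cls P a s"
  using assms unfolding kappa_def cls_def by (auto elim!: quotientE)

lemma cls_in: "s \<notin> P \<Longrightarrow> cls P a s \<in> kappa P"
  unfolding kappa_def cls_def by (auto intro: quotientI)

lemma cls_self: "is_prime_ideal P \<Longrightarrow> s \<notin> P \<Longrightarrow> (a, s) \<in> cls P a s"
  unfolding mem_cls using ideal_0[OF prime_ideal] by simp

lemma UN_const: "A \<noteq> {} \<Longrightarrow> (\<And>x. x \<in> A \<Longrightarrow> f x = c) \<Longrightarrow> \<Union>(f ` A) = c"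
  by auto

lemma add_cls:
  assumes P: "is_prime_ideal P" and st: "s \<notin> P" "t \<notin> P"
  shows "kappa_add P (cls P a s) (cls P b t) = cls P (a * t + b * s) (s * t)"
proof -
  have I: "is_ideal P" using P by (simp add: prime_ideal)
  have inner: "(\<Union>(b', t')\<in>cls P b t. kappa_rel P `` {(a' * t' + b' * s', s' * t')}) = cls P (a * t + b * s) (s * t)"
    if "(a', s') \<in> cls P a s" for a' s'
  proof (rule UN_const)
    show "cls P b t \<noteq> {}" using cls_self[OF P st(2)] by blast
    fix x assume "x \<in> cls P b t"
    then obtain b' t' where x: "x = (b', t')" and m: "t' \<notin> P" "b * t' - b' * t \<in> P"
      by (cases x) (auto simp: mem_cls)
    have m2: "s' \<notin> P" "a * s' - a' * s \<in> P" using that by (auto simp: mem_cls)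
    have "t * t' * (a * s' - a' * s) + s * s' * (b * t' - b' * t) \<in> P"
      using I m m2 by (simp add: ideal_add ideal_mult)
    moreover have "t * t' * (a * s' - a' * s) + s * s' * (b * t' - b' * t)
        = (a * t + b * s) * (s' * t') - (a' * t' + b' * s') * (s * t)"
      by (simp add: algebra_simps)
    ultimately have "cls P (a * t + b * s) (s * t) = cls P (a' * t' + b' * s') (s' * t')"
      using cls_eq_iff[OF P] P st m m2 prime_mult by metis
    then show "(case x of (b', t') \<Rightarrow> kappa_rel P `` {(a' * t' + b' * s', s' * t')}) = cls P (a * t + b * s) (s * t)"
      using x by (simp add: cls_def)
  qed
  show ?thesis unfolding kappa_add_def
  proof (rule UN_const)
    show "cls P a s \<noteq> {}" using cls_self[OF P st(1)] by blast
    fix x assume "x \<in> cls P a s"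
    then show "(case x of (a', s') \<Rightarrow> \<Union>(b', t')\<in>cls P b t. kappa_rel P `` {(a' * t' + b' * s', s' * t')}) = cls P (a * t + b * s) (s * t)"
      using inner by (cases x) simp
  qed
qed

lemma smult_cls:
  assumes P: "is_prime_ideal P" and st: "s \<notin> P"
  shows "kappa_smult P r (cls P a s) = cls P (r * a) s"
proof -
  have I: "is_ideal P" using P by (simp add: prime_ideal)
  show ?thesis unfolding kappa_smult_def
  proof (rule UN_const)
    show "cls P a s \<noteq> {}" using cls_self[OF P st] by blast
    fix x assume "x \<in> cls P a s"
    then obtain a' s' where x: "x = (a', s')" and m: "s' \<notin> P" "a * s' - a' * s \<in> P"
      by (cases x) (auto simp: mem_cls)
    have "r * (a * s' - a' * s) \<in> P" using I m by (simp add: ideal_mult)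
    moreover have "r * (a * s' - a' * s) = (r * a) * s' - (r * a') * s" by (simp add: algebra_simps)
    ultimately have "cls P (r * a) s = cls P (r * a') s'" using cls_eq_iff[OF P st m(1)] by simp
    then show "(case x of (a, s) \<Rightarrow> kappa_rel P `` {(r * a, s)}) = cls P (r * a) s"
      using x by (simp add: cls_def)
  qed
qed

lemma zero_cls: "kappa_zero P = cls P 0 1" by (simp add: kappa_zero_def cls_def)



context fixes P :: "'a::comm_ring_1 set" assumes P: "is_prime_ideal P"
begin

lemma I: "is_ideal P" using P by (simp add: prime_ideal)
lemma one_notin: "1 \<notin> P" using prime_1[OF P] .
lemma pm: "s \<notin> P \<Longrightarrow> t \<notin> P \<Longrightarrow> s * t \<notin> P" using prime_mult[OF P] .

lemma zero_in: "kappa_zero P \<in> kappa P"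
  by (simp add: zero_cls cls_in one_notin)

lemma add_in: "X \<in> kappa P \<Longrightarrow> Y \<in> kappa P \<Longrightarrow> kappa_add P X Y \<in> kappa P"
  by (auto elim!: kappa_cases simp: add_cls[OF P] cls_in pm)

lemma sm_in: "X \<in> kappa P \<Longrightarrow> kappa_smult P r X \<in> kappa P"
  by (auto elim!: kappa_cases simp: smult_cls[OF P] cls_in)

lemma add_zero_left: "X \<in> kappa P \<Longrightarrow> kappa_add P (kappa_zero P) X = X"
  apply (erule kappa_cases)
  by (simp add: zero_cls add_cls[OF P] one_notin)

lemma sm_zero: "kappa_smult P r (kappa_zero P) = kappa_zero P"
  by (simp add: zero_cls smult_cls[OF P] one_notin)

lemma cls_zero_iff: "s \<notin> P \<Longrightarrow> cls P a s = kappa_zero P \<longleftrightarrow> a \<in> P"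
  by (simp add: zero_cls cls_eq_iff[OF P] one_notin)

lemma sm_P: "r \<in> P \<Longrightarrow> X \<in> kappa P \<Longrightarrow> kappa_smult P r X = kappa_zero P"
  apply (elim kappa_cases)
  by (simp add: smult_cls[OF P] cls_zero_iff ideal_mult2[OF I])

lemma add_sub: "X \<in> kappa P \<Longrightarrow> W \<in> kappa P \<Longrightarrow>
   kappa_add P X (kappa_add P W (kappa_smult P (-1) X)) = W"
  apply (elim kappa_cases)
  apply (simp add: smult_cls[OF P] add_cls[OF P] pm)
  apply (rule cls_eqI[OF P]) by (simp_all add: pm algebra_simps)

lemma sm_distrib: "X \<in> kappa P \<Longrightarrow>
   kappa_smult P (r1 + r2) X = kappa_add P (kappa_smult P r1 X) (kappa_smult P r2 X)"
  apply (elim kappa_cases)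
  apply (simp add: smult_cls[OF P] add_cls[OF P] pm)
  apply (rule cls_eqI[OF P]) by (simp_all add: pm algebra_simps)

lemma sm_assoc: "X \<in> kappa P \<Longrightarrow>
   kappa_smult P (r * c) X = kappa_smult P r (kappa_smult P c X)"
  by (auto elim!: kappa_cases simp: smult_cls[OF P] mult.assoc)

lemma sm_add: "X \<in> kappa P \<Longrightarrow> Y \<in> kappa P \<Longrightarrow>
   kappa_smult P r (kappa_add P X Y) = kappa_add P (kappa_smult P r X) (kappa_smult P r Y)"
  apply (elim kappa_cases)
  apply (simp add: smult_cls[OF P] add_cls[OF P] pm)
  apply (rule cls_eqI[OF P]) by (simp_all add: pm algebra_simps)

lemma sm_div: "r \<notin> P \<Longrightarrow> X \<in> kappa P \<Longrightarrow> \<exists>Y\<in>kappa P. kappa_smult P r Y = X"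
proof -
  assume r: "r \<notin> P" and X: "X \<in> kappa P"
  then obtain a s where s: "s \<notin> P" and Xe: "X = cls P a s" by (auto elim!: kappa_cases)
  have "kappa_smult P r (cls P a (s * r)) = X"
    using r s Xe by (simp add: smult_cls[OF P] pm cls_eqI[OF P] algebra_simps)
  then show ?thesis using cls_in pm[OF s r] by blast
qed

lemma sm_cancel: "r \<notin> P \<Longrightarrow> X \<in> kappa P \<Longrightarrow> kappa_smult P r X = kappa_zero P \<Longrightarrow> X = kappa_zero P"
  apply (elim kappa_cases)
  using P unfolding is_prime_ideal_def
  by (simp add: smult_cls[OF P] cls_zero_iff) blast

lemma K_nontriv: "kappa P \<noteq> {kappa_zero P}"
proof -
  have "cls P 1 1 \<in> kappa P" by (simp add: cls_in one_notin)
  moreover have "cls P 1 1 \<noteq> kappa_zero P" by (simp add: cls_zero_iff one_notin)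
  ultimately show ?thesis by blast
qed

end


lemma gab_up: "gabriel_topology F \<Longrightarrow> a \<in> F \<Longrightarrow> is_ideal b \<Longrightarrow> a \<subseteq> b \<Longrightarrow> b \<in> F"
  unfolding gabriel_topology_def by blast

lemma gab_UNIV: "gabriel_topology F \<Longrightarrow> UNIV \<in> F"
proof -
  assume g: "gabriel_topology F"
  then obtain a where "a \<in> F" unfolding gabriel_topology_def by blast
  then show ?thesis using gab_up[OF g _ ideal_UNIV] by blast
qed

lemma chain_finite_bound:
  assumes "finite S" "C \<noteq> {}" "chain\<^sub>\<subseteq> C" "S \<subseteq> \<Union>C"
  shows "\<exists>B\<in>C. S \<subseteq> B"
  using assms
proof (induction S rule: finite_induct)
  case empty then show ?case by blast
next
  case (insert x S)
  then obtain B where B: "B \<in> C" "S \<subseteq> B" by blast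
  obtain B' where B': "B' \<in> C" "x \<in> B'" using insert by blast
  from insert(5) B B' have "B \<subseteq> B' \<or> B' \<subseteq> B" unfolding chain_subset_def by blast
  then show ?case using B B' by blast
qed

lemma chain_ideal:
  assumes "C \<noteq> {}" "chain\<^sub>\<subseteq> C" "\<forall>B\<in>C. is_ideal B"
  shows "is_ideal (\<Union>C)"
  unfolding is_ideal_def
proof (intro conjI ballI allI)
  show "0 \<in> \<Union>C" using assms ideal_0 by blast
next
  fix x y assume "x \<in> \<Union>C" "y \<in> \<Union>C"
  then obtain B1 B2 where "B1 \<in> C" "B2 \<in> C" "x \<in> B1" "y \<in> B2" by blast
  moreover have "B1 \<subseteq> B2 \<or> B2 \<subseteq> B1" using assms(2) calculation unfolding chain_subset_def by blast
  ultimately show "x + y \<in> \<Union>C" using assms(3) ideal_add by (metis UnionI subsetD)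
next
  fix r x assume "x \<in> \<Union>C"
  then show "r * x \<in> \<Union>C" using assms(3) ideal_mult by blast
qed

lemma ideal_gen_sub: "S \<subseteq> ideal_gen S" unfolding ideal_gen_def by blast
lemma ideal_gen_least: "is_ideal B \<Longrightarrow> S \<subseteq> B \<Longrightarrow> ideal_gen S \<subseteq> B"
  unfolding ideal_gen_def by blast

lemma colon_ideal_is: "is_ideal b \<Longrightarrow> is_ideal (colon_ideal b r)"
  unfolding is_ideal_def colon_ideal_def by (auto simp: algebra_simps mult.assoc)

lemma above_Fstar:
  fixes F :: "'a::comm_ring_1 set set"
  assumes noeth: "noetherian_ring TYPE('a)" and g: "gabriel_topology F"
    and Ps: "P \<in> F_star F" and b: "is_ideal b" "P \<subset> b"
  shows "b \<in> F"
proof (rule ccontr)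
  assume nb: "b \<notin> F"
  define A where "A = {c. is_ideal c \<and> P \<subset> c \<and> c \<notin> F}"
  have bA: "b \<in> A" using b nb A_def by blast
  have "\<forall>C\<in>chains A. \<exists>U\<in>A. \<forall>X\<in>C. X \<subseteq> U"
  proof
    fix C assume C: "C \<in> chains A"
    show "\<exists>U\<in>A. \<forall>X\<in>C. X \<subseteq> U"
    proof (cases "C = {}")
      case True then show ?thesis using bA by blast
    next
      case False
      have ch: "chain\<^sub>\<subseteq> C" "C \<subseteq> A" using C unfolding chains_def by auto
      have idC: "is_ideal (\<Union>C)" using chain_ideal[OF False ch(1)] ch(2) A_def by blast
      then obtain S where S: "finite S" "\<Union>C = ideal_gen S" using noeth unfolding noetherian_ring_def by blast
      then obtain B where B: "B \<in> C" "S \<subseteq> B" using chain_finite_bound[OF S(1) False ch(1)] ideal_gen_sub by metis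
      have "is_ideal B" using B ch A_def by blast
      then have "\<Union>C = B" using S B ideal_gen_least by blast
      then have "\<Union>C \<in> A" using B ch by auto
      then show ?thesis by blast
    qed
  qed
  from Zorn_Lemma2[OF this] obtain M where M: "M \<in> A" and Mmax: "\<forall>X\<in>A. M \<subseteq> X \<longrightarrow> X = M" by blast
  have MI: "is_ideal M" and PM: "P \<subset> M" and MF: "M \<notin> F" using M A_def by auto
  have bigger: "X \<in> F" if "is_ideal X" "M \<subseteq> X" "X \<noteq> M" for X
    using that Mmax PM A_def by blast
  have MU: "M \<noteq> UNIV" using MF gab_UNIV[OF g] by blast
  have Mprime: "is_prime_ideal M"
    unfolding is_prime_ideal_def
  proof (intro conjI MI MU allI impI)
    fix x y assume xy: "x * y \<in> M"
    show "x \<in> M \<or> y \<in> M"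
    proof (rule ccontr)
      assume nxy: "\<not> (x \<in> M \<or> y \<in> M)"
      define Mx where "Mx = {m + c * x | m c. m \<in> M}"
      have MxI: "is_ideal Mx" unfolding is_ideal_def Mx_def
      proof (intro conjI ballI allI)
        show "0 \<in> {m + c * x |m c. m \<in> M}" by (intro CollectI exI[of _ 0]) (simp add: ideal_0[OF MI])
      next
        fix u v assume "u \<in> {m + c * x |m c. m \<in> M}" "v \<in> {m + c * x |m c. m \<in> M}"
        then obtain m1 c1 m2 c2 where "u = m1 + c1 * x" "v = m2 + c2 * x" "m1 \<in> M" "m2 \<in> M" by blast
        then show "u + v \<in> {m + c * x |m c. m \<in> M}"
          by (intro CollectI exI[of _ "m1 + m2"] exI[of _ "c1 + c2"]) (auto simp: algebra_simps ideal_add[OF MI])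
      next
        fix r u assume "u \<in> {m + c * x |m c. m \<in> M}"
        then obtain m1 c1 where "u = m1 + c1 * x" "m1 \<in> M" by blast
        then have "r * u = r * m1 + (r * c1) * x" "r * m1 \<in> M" by (auto simp: algebra_simps ideal_mult[OF MI] ideal_mult2[OF MI])
        then show "r * u \<in> {m + c * x |m c. m \<in> M}" by blast
      qed
      have "M \<subseteq> Mx"
      proof
        fix m assume "m \<in> M"
        moreover have "m = m + 0 * x" by simp
        ultimately show "m \<in> Mx" unfolding Mx_def by blast
      qed
      moreover have "x \<in> Mx"
      proof -
        have "x = 0 + 1 * x" by simp
        then show ?thesis unfolding Mx_def using ideal_0[OF MI] by blast
      qed
      ultimately have MxF: "Mx \<in> F" using bigger MxI nxy by blast
      have cxI: "is_ideal (colon_ideal M x)" using colon_ideal_is[OF MI] .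
      have "M \<subseteq> colon_ideal M x" unfolding colon_ideal_def using ideal_mult2[OF MI] by blast
      moreover have "y \<in> colon_ideal M x" unfolding colon_ideal_def using xy by (simp add: mult.commute)
      ultimately have cxF: "colon_ideal M x \<in> F" using bigger cxI nxy by blast
      have "\<forall>r\<in>Mx. colon_ideal M r \<in> F"
      proof
        fix r assume "r \<in> Mx"
        then obtain m c where r: "r = m + c * x" "m \<in> M" unfolding Mx_def by blast
        have "colon_ideal M x \<subseteq> colon_ideal M r"
        proof
          fix t assume "t \<in> colon_ideal M x"
          then have "t * x \<in> M" unfolding colon_ideal_def by simp
          then have "t * m + c * (t * x) \<in> M" using r MI ideal_add ideal_mult ideal_mult by metis
          moreover have "t * r = t * m + c * (t * x)" using r by (simp add: algebra_simps)
          ultimately show "t \<in> colon_ideal M r" unfolding colon_ideal_def by simp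
        qed
        then show "colon_ideal M r \<in> F" using gab_up[OF g cxF colon_ideal_is[OF MI]] by blast
      qed
      then have "M \<in> F" using g MI MxF unfolding gabriel_topology_def by blast
      then show False using MF by blast
    qed
  qed
  then show False using Ps PM MF unfolding F_star_def by blast
qed



definition Uq :: "'a::comm_ring_1 set \<Rightarrow> 'a set \<Rightarrow> ('a \<times> 'a) set set" where
  "Uq P Q = {cls P a s | a s. s \<notin> Q}"

definition coset :: "('m \<Rightarrow> 'm \<Rightarrow> 'm) \<Rightarrow> 'm set \<Rightarrow> 'm \<Rightarrow> 'm set" where
  "coset add U x = {add x u | u. u \<in> U}"

context fixes P :: "'a::comm_ring_1 set" assumes P: "is_prime_ideal P"
begin

abbreviation "K \<equiv> kappa P"
abbreviation "ad \<equiv> kappa_add P"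
abbreviation "z \<equiv> kappa_zero P"
abbreviation "sm \<equiv> kappa_smult P"

lemma add_zero_right: "X \<in> K \<Longrightarrow> ad X z = X"
  apply (erule kappa_cases)
  by (simp add: zero_cls add_cls[OF P] one_notin[OF P])

lemma K_sub: "is_submodule K ad z sm K"
  unfolding is_submodule_def using zero_in[OF P] add_in[OF P] sm_in[OF P] by blast

lemma sub_facts:
  assumes "is_submodule K ad z sm U"
  shows "U \<subseteq> K" "z \<in> U" "\<And>x y. x \<in> U \<Longrightarrow> y \<in> U \<Longrightarrow> ad x y \<in> U" "\<And>r x. x \<in> U \<Longrightarrow> sm r x \<in> U"
  using assms unfolding is_submodule_def by blast+

lemma coset_self: "x \<in> K \<Longrightarrow> is_submodule K ad z sm U \<Longrightarrow> x \<in> coset ad U x"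
proof -
  assume x: "x \<in> K" and U: "is_submodule K ad z sm U"
  have "x = ad x z" using add_zero_right[OF x] by simp
  moreover have "z \<in> U" using sub_facts(2)[OF U] .
  ultimately show ?thesis unfolding coset_def by blast
qed

lemma coset_U: assumes U: "is_submodule K ad z sm U" and x: "x \<in> U"
  shows "coset ad U x = U"
proof
  show "coset ad U x \<subseteq> U" unfolding coset_def using sub_facts[OF U] x by blast
  show "U \<subseteq> coset ad U x"
  proof
    fix w assume w: "w \<in> U"
    have "ad x (ad w (sm (-1) x)) = w" using add_sub[OF P] sub_facts(1)[OF U] x w by blast
    moreover have "ad w (sm (-1) x) \<in> U" using sub_facts[OF U] x w by blast
    ultimately show "w \<in> coset ad U x" unfolding coset_def by (metis (mono_tags, lifting) mem_Collect_eq)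
  qed
qed

lemma U_in_quot: "is_submodule K ad z sm U \<Longrightarrow> U \<in> quot_carrier K ad U"
proof -
  assume U: "is_submodule K ad z sm U"
  have "coset ad U z = U" using coset_U[OF U sub_facts(2)[OF U]] .
  then have "U = (\<lambda>x. {ad x u | u. u \<in> U}) z" unfolding coset_def by simp
  from image_eqI[where f="\<lambda>x. {ad x u | u. u \<in> U}", OF this zero_in[OF P]] show ?thesis unfolding quot_carrier_def .
qed

lemma quot_cases: assumes "C \<in> quot_carrier K ad U" obtains x where "x \<in> K" "C = coset ad U x"
  using assms unfolding quot_carrier_def coset_def by (rule imageE)

lemma qsm_coset:
  assumes U: "is_submodule K ad z sm U" and x: "x \<in> K" and r: "sm r x \<in> U"
  shows "quot_smult ad sm U r (coset ad U x) = U"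
proof
  show "quot_smult ad sm U r (coset ad U x) \<subseteq> U"
  proof
    fix w assume "w \<in> quot_smult ad sm U r (coset ad U x)"
    then obtain c u where w: "w = ad (sm r c) u" "c \<in> coset ad U x" "u \<in> U"
      unfolding quot_smult_def by blast
    then obtain u1 where c: "c = ad x u1" "u1 \<in> U" unfolding coset_def by blast
    have "sm r c = ad (sm r x) (sm r u1)" using c sm_add[OF P] x sub_facts(1)[OF U] by blast
    then show "w \<in> U" using w c r sub_facts[OF U] by simp
  qed
  show "U \<subseteq> quot_smult ad sm U r (coset ad U x)"
  proof
    fix w assume w: "w \<in> U"
    have "ad (sm r x) (ad w (sm (-1) (sm r x))) = w" using add_sub[OF P] sub_facts(1)[OF U] r w by blast
    moreover have "ad w (sm (-1) (sm r x)) \<in> U" using sub_facts[OF U] r w by blast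
    moreover have "x \<in> coset ad U x" using coset_self[OF x U] .
    ultimately show "w \<in> quot_smult ad sm U r (coset ad U x)" unfolding quot_smult_def by blast
  qed
qed

lemma qsm_coset_D:
  assumes U: "is_submodule K ad z sm U" and x: "x \<in> K" and e: "quot_smult ad sm U r (coset ad U x) = U"
  shows "sm r x \<in> U"
proof -
  have "ad (sm r x) z \<in> quot_smult ad sm U r (coset ad U x)"
    unfolding quot_smult_def using coset_self[OF x U] sub_facts(2)[OF U] by blast
  then show ?thesis using e add_zero_right sm_in[OF P x] by simp
qed

lemma ann_z: "z \<in> annih_part K z sm a"
  unfolding annih_part_def using zero_in[OF P] sm_zero[OF P] by blast

end



context fixes P Q :: "'a::comm_ring_1 set" assumes P: "is_prime_ideal P" and Q: "is_prime_ideal Q"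
  and PQ: "P \<subseteq> Q"
begin

abbreviation "KP \<equiv> kappa P"
abbreviation "adP \<equiv> kappa_add P"
abbreviation "zP \<equiv> kappa_zero P"
abbreviation "smP \<equiv> kappa_smult P"

lemma Uq_mem: "X \<in> Uq P Q \<longleftrightarrow> (\<exists>a s. s \<notin> Q \<and> X = cls P a s)"
  unfolding Uq_def by blast

lemma Uq_K: "Uq P Q \<subseteq> KP"
  unfolding Uq_def using PQ cls_in by blast

lemma Uq_sub: "is_submodule KP adP zP smP (Uq P Q)"
  unfolding is_submodule_def
proof (intro conjI ballI allI Uq_K)
  show "zP \<in> Uq P Q" unfolding Uq_mem zero_cls using prime_1[OF Q] by blast
next
  fix X Y assume "X \<in> Uq P Q" "Y \<in> Uq P Q"
  then obtain a s b t where "s \<notin> Q" "t \<notin> Q" "X = cls P a s" "Y = cls P b t" unfolding Uq_mem by blast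
  moreover then have "s \<notin> P" "t \<notin> P" using PQ by auto
  ultimately show "adP X Y \<in> Uq P Q" unfolding Uq_mem
    using add_cls[OF P] prime_mult[OF Q] by metis
next
  fix r X assume "X \<in> Uq P Q"
  then obtain a s where "s \<notin> Q" "X = cls P a s" unfolding Uq_mem by blast
  moreover then have "s \<notin> P" using PQ by auto
  ultimately show "smP r X \<in> Uq P Q" unfolding Uq_mem using smult_cls[OF P] by metis
qed

lemma Uq_nonzero: "Uq P Q \<noteq> {zP}"
proof -
  have "cls P 1 1 \<in> Uq P Q" unfolding Uq_mem using prime_1[OF Q] by blast
  moreover have "cls P 1 1 \<noteq> zP" using cls_zero_iff[OF P] prime_1[OF P] by metis
  ultimately show ?thesis by blast
qed

lemma Uq_proper: assumes "Q \<noteq> P" shows "Uq P Q \<noteq> KP"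
proof -
  obtain t where t: "t \<in> Q" "t \<notin> P" using assms PQ by blast
  have "cls P 1 t \<notin> Uq P Q"
  proof
    assume "cls P 1 t \<in> Uq P Q"
    then obtain a s where s: "s \<notin> Q" "cls P 1 t = cls P a s" unfolding Uq_mem by blast
    then have "1 * s - a * t \<in> P" using cls_eq_iff[OF P] t PQ by blast
    then have "1 * s - a * t \<in> Q" using PQ by blast
    moreover have "a * t \<in> Q" using t ideal_mult[OF prime_ideal[OF Q]] by blast
    ultimately have "(1 * s - a * t) + a * t \<in> Q" using ideal_add[OF prime_ideal[OF Q]] by blast
    then show False using s by simp
  qed
  moreover have "cls P 1 t \<in> KP" using cls_in t by blast
  ultimately show ?thesis by blast
qed

lemma Uq_div: assumes r: "r \<notin> Q" and X: "X \<in> KP" and m: "smP r X \<in> Uq P Q" shows "X \<in> Uq P Q"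
proof -
  obtain a s where s: "s \<notin> P" "X = cls P a s" using X by (auto elim: kappa_cases)
  obtain b u where u: "u \<notin> Q" "cls P (r * a) s = cls P b u"
    using m s smult_cls[OF P] unfolding Uq_mem by metis
  have uP: "u \<notin> P" "r \<notin> P" using u r PQ by auto
  have "r * a * u - b * s \<in> P" using u s cls_eq_iff[OF P] uP by blast
  then have "cls P a s = cls P b (u * r)"
    using cls_eq_iff[OF P s(1) prime_mult[OF P uP]] by (simp add: algebra_simps)
  moreover have "u * r \<notin> Q" using prime_mult[OF Q u(1) r] .
  ultimately show ?thesis using s unfolding Uq_mem by blast
qed

lemma Uq_split: assumes r: "r \<notin> Q" and X: "X \<in> Uq P Q" shows "\<exists>Y\<in>Uq P Q. smP r Y = X"
proof -
  obtain a s where s: "s \<notin> Q" "X = cls P a s" using X unfolding Uq_mem by blast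
  have sP: "s \<notin> P" "r \<notin> P" using s r PQ by auto
  have "smP r (cls P a (s * r)) = X" using s sP
    by (simp add: smult_cls[OF P] prime_mult[OF P] cls_eqI[OF P] algebra_simps)
  moreover have "cls P a (s * r) \<in> Uq P Q" unfolding Uq_mem using prime_mult[OF Q s(1) r] by blast
  ultimately show ?thesis by blast
qed

lemma F_notsub: "gabriel_topology F \<Longrightarrow> Q \<notin> F \<Longrightarrow> a \<in> F \<Longrightarrow> \<exists>r\<in>a. r \<notin> Q"
  using gab_up[of F a Q] prime_ideal[OF Q] by blast

lemma Uq_divisible:
  assumes g: "gabriel_topology F" and QF: "Q \<notin> F"
  shows "F_divisible F KP adP zP smP (Uq P Q)"
  unfolding F_divisible_def
proof
  fix a assume a: "a \<in> F"
  obtain r where r: "r \<in> a" "r \<notin> Q" using F_notsub[OF g QF a] by blast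
  show "ideal_times KP adP zP smP a (Uq P Q) = Uq P Q"
  proof
    show "ideal_times KP adP zP smP a (Uq P Q) \<subseteq> Uq P Q"
      unfolding ideal_times_def using Uq_sub sub_facts(4)[OF P Uq_sub] by blast
    show "Uq P Q \<subseteq> ideal_times KP adP zP smP a (Uq P Q)"
    proof
      fix X assume "X \<in> Uq P Q"
      then obtain Y where "Y \<in> Uq P Q" "smP r Y = X" using Uq_split[OF r(2)] by blast
      then show "X \<in> ideal_times KP adP zP smP a (Uq P Q)" unfolding ideal_times_def using r by blast
    qed
  qed
qed

lemma Uq_tf:
  assumes g: "gabriel_topology F" and QF: "Q \<notin> F"
  shows "F_torsion_free F (quot_carrier KP adP (Uq P Q)) (Uq P Q) (quot_smult adP smP (Uq P Q))"
  unfolding F_torsion_free_def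
proof
  fix a assume a: "a \<in> F"
  obtain r where r: "r \<in> a" "r \<notin> Q" using F_notsub[OF g QF a] by blast
  let ?U = "Uq P Q"
  show "annih_part (quot_carrier KP adP ?U) ?U (quot_smult adP smP ?U) a = {?U}"
  proof
    show "annih_part (quot_carrier KP adP ?U) ?U (quot_smult adP smP ?U) a \<subseteq> {?U}"
    proof
      fix C assume C: "C \<in> annih_part (quot_carrier KP adP ?U) ?U (quot_smult adP smP ?U) a"
      then have Cq: "C \<in> quot_carrier KP adP ?U" and Ca: "quot_smult adP smP ?U r C = ?U"
        unfolding annih_part_def using r by auto
      obtain x where x: "x \<in> KP" "C = coset adP ?U x" using quot_cases[OF P Cq] by blast
      have "smP r x \<in> ?U" using qsm_coset_D[OF P Uq_sub x(1)] Ca x by simp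
      then have "x \<in> ?U" using Uq_div r x by blast
      then show "C \<in> {?U}" using coset_U[OF P Uq_sub] x by simp
    qed
    show "{?U} \<subseteq> annih_part (quot_carrier KP adP ?U) ?U (quot_smult adP smP ?U) a"
    proof -
      have "\<forall>r'\<in>a. quot_smult adP smP ?U r' ?U = ?U"
      proof
        fix r' assume "r' \<in> a"
        have "smP r' zP \<in> ?U" using sub_facts[OF P Uq_sub] by blast
        then have "quot_smult adP smP ?U r' (coset adP ?U zP) = ?U"
          using qsm_coset[OF P Uq_sub zero_in[OF P]] by blast
        then show "quot_smult adP smP ?U r' ?U = ?U"
          using coset_U[OF P Uq_sub sub_facts(2)[OF P Uq_sub]] by simp
      qed
      then show ?thesis unfolding annih_part_def using U_in_quot[OF P Uq_sub] by blast
    qed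
  qed
qed

end


lemma ideal_times_gen: "r \<in> a \<Longrightarrow> x \<in> X \<Longrightarrow> smu r x \<in> ideal_times M addu zu smu a X"
  unfolding ideal_times_def by blast

lemma ideal_times_least: "is_submodule M addu zu smu V \<Longrightarrow> \<forall>r\<in>a. \<forall>x\<in>X. smu r x \<in> V \<Longrightarrow> ideal_times M addu zu smu a X \<subseteq> V"
  unfolding ideal_times_def by blast

context fixes P :: "'a::comm_ring_1 set" and F :: "'a set set"
  assumes P: "is_prime_ideal P" and g: "gabriel_topology F"
    and noeth: "noetherian_ring TYPE('a)"
begin

abbreviation "KG \<equiv> kappa P"
abbreviation "adG \<equiv> kappa_add P"
abbreviation "zG \<equiv> kappa_zero P"
abbreviation "smG \<equiv> kappa_smult P"

lemma PnotF_notsub: "P \<notin> F \<Longrightarrow> a \<in> F \<Longrightarrow> \<exists>r\<in>a. r \<notin> P"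
  using gab_up[of F a P] prime_ideal[OF P] g by blast

lemma K_tf: assumes "P \<notin> F" shows "F_torsion_free F KG zG smG"
  unfolding F_torsion_free_def
proof
  fix a assume a: "a \<in> F"
  obtain r where r: "r \<in> a" "r \<notin> P" using PnotF_notsub[OF assms a] by blast
  show "annih_part KG zG smG a = {zG}"
  proof
    show "annih_part KG zG smG a \<subseteq> {zG}"
    proof
      fix X assume "X \<in> annih_part KG zG smG a"
      then have "X \<in> KG" "smG r X = zG" unfolding annih_part_def using r(1) by auto
      then show "X \<in> {zG}" using sm_cancel[OF P r(2)] by blast
    qed
    show "{zG} \<subseteq> annih_part KG zG smG a" using ann_z[OF P] by blast
  qed
qed

lemma K_div: assumes "P \<notin> F" shows "F_divisible F KG adG zG smG KG"
  unfolding F_divisible_def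
proof
  fix a assume a: "a \<in> F"
  obtain r where r: "r \<in> a" "r \<notin> P" using PnotF_notsub[OF assms a] by blast
  show "ideal_times KG adG zG smG a KG = KG"
  proof
    show "ideal_times KG adG zG smG a KG \<subseteq> KG"
      using ideal_times_least[OF K_sub[OF P]] sm_in[OF P] by blast
    show "KG \<subseteq> ideal_times KG adG zG smG a KG"
    proof
      fix X assume "X \<in> KG"
      then obtain Y where "Y \<in> KG" "smG r Y = X" using sm_div[OF P r(2)] by blast
      then show "X \<in> ideal_times KG adG zG smG a KG" using ideal_times_gen[OF r(1)] by metis
    qed
  qed
qed

lemma tf_PnotF: assumes "F_torsion_free F KG zG smG" shows "P \<notin> F"
proof
  assume PF: "P \<in> F"
  have "annih_part KG zG smG P = KG" unfolding annih_part_def using sm_P[OF P] by auto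
  then show False using assms PF K_nontriv[OF P] unfolding F_torsion_free_def by blast
qed

lemma div_PnotF: assumes "F_divisible F KG adG zG smG KG" shows "P \<notin> F"
proof
  assume PF: "P \<in> F"
  have zs: "is_submodule KG adG zG smG {zG}"
    unfolding is_submodule_def using zero_in[OF P] add_zero_left[OF P] sm_zero[OF P] by auto
  have "ideal_times KG adG zG smG P KG \<subseteq> {zG}"
    using ideal_times_least[OF zs] sm_P[OF P] by blast
  then have "KG \<subseteq> {zG}" using assms PF unfolding F_divisible_def by blast
  then show False using K_nontriv[OF P] zero_in[OF P] by blast
qed

lemma star_simple_tf:
  assumes Ps: "P \<in> F_star F" and U: "is_submodule KG adG zG smG U" "U \<noteq> {zG}" "U \<noteq> KG"
  shows "\<not> F_torsion_free F (quot_carrier KG adG U) U (quot_smult adG smG U)"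
proof
  assume tf: "F_torsion_free F (quot_carrier KG adG U) U (quot_smult adG smG U)"
  have UK: "U \<subseteq> KG" and zU: "zG \<in> U" using sub_facts[OF P U(1)] by auto
  obtain x where x: "x \<in> KG" "x \<notin> U" using UK U(3) by blast
  obtain y where y: "y \<in> U" "y \<noteq> zG" using U(2) zU by blast
  obtain u s where us: "s \<notin> P" "x = cls P u s" by (rule kappa_cases[OF x(1)])
  obtain v t where vt: "t \<notin> P" "y = cls P v t" using kappa_cases[of y P] y UK by blast
  have vP: "v \<notin> P" using y vt cls_zero_iff[OF P] by blast
  define b where "b = {r. smG r x \<in> U}"
  have bI: "is_ideal b" unfolding is_ideal_def b_def
  proof (intro conjI ballI allI; simp)
    show "smG 0 x \<in> U" using sm_P[OF P ideal_0[OF prime_ideal[OF P]] x(1)] zU by simp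
  next
    fix r1 r2 assume "smG r1 x \<in> U" "smG r2 x \<in> U"
    then show "smG (r1 + r2) x \<in> U" using sm_distrib[OF P x(1)] sub_facts[OF P U(1)] by simp
  next
    fix r c assume "smG c x \<in> U"
    then show "smG (r * c) x \<in> U" using sm_assoc[OF P x(1)] sub_facts[OF P U(1)] by simp
  qed
  have Pb: "P \<subseteq> b" unfolding b_def using sm_P[OF P _ x(1)] zU by auto
  have "smG (s * v) x = cls P (s * v * u) s" by (simp add: us smult_cls[OF P])
  also have "\<dots> = cls P (u * t * v) t" by (rule cls_eqI[OF P us(1) vt(1)]) (simp add: algebra_simps)
  also have "\<dots> = smG (u * t) y" by (simp add: vt smult_cls[OF P])
  finally have "smG (s * v) x = smG (u * t) y" .
  then have "s * v \<in> b" unfolding b_def using y sub_facts[OF P U(1)] by simp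
  moreover have "s * v \<notin> P" using prime_mult[OF P us(1) vP] .
  ultimately have "P \<subset> b" using Pb by blast
  then have bF: "b \<in> F" using above_Fstar[OF noeth g Ps bI] by blast
  let ?C = "coset adG U x"
  have "?C \<in> annih_part (quot_carrier KG adG U) U (quot_smult adG smG U) b"
    unfolding annih_part_def
  proof (intro CollectI conjI ballI)
    show "?C \<in> quot_carrier KG adG U" unfolding quot_carrier_def coset_def by (rule imageI[OF x(1)])
    fix r assume "r \<in> b"
    then show "quot_smult adG smG U r ?C = U" using qsm_coset[OF P U(1) x(1)] b_def by simp
  qed
  moreover have "?C \<noteq> U" using coset_self[OF P x(1) U(1)] x(2) by blast
  ultimately show False using tf bF unfolding F_torsion_free_def by blast
qed

lemma star_simple_div:
  assumes Ps: "P \<in> F_star F" and V: "is_submodule KG adG zG smG V" "V \<noteq> {zG}" "V \<noteq> KG"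
  shows "\<not> F_divisible F KG adG zG smG V"
proof
  assume dv: "F_divisible F KG adG zG smG V"
  have VK: "V \<subseteq> KG" and zV: "zG \<in> V" using sub_facts[OF P V(1)] by auto
  obtain y where y: "y \<in> V" "y \<noteq> zG" using V(2) zV by blast
  obtain v t where vt: "t \<notin> P" "y = cls P v t" using kappa_cases[of y P] y VK by blast
  have vP: "v \<notin> P" using y vt cls_zero_iff[OF P] by blast
  have "KG \<subseteq> V"
  proof
    fix X assume X: "X \<in> KG"
    obtain u s where us: "s \<notin> P" "X = cls P u s" by (rule kappa_cases[OF X])
    define d where "d = s * v"
    have dP: "d \<notin> P" unfolding d_def using prime_mult[OF P us(1) vP] .
    define ad where "ad = {c * d + p | c p. p \<in> P}"
    have adI: "is_ideal ad" unfolding is_ideal_def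
    proof (intro conjI ballI allI)
      have "(0::'a) = 0 * d + 0" by simp
      then show "0 \<in> ad" unfolding ad_def using ideal_0[OF prime_ideal[OF P]] by blast
    next
      fix x y assume "x \<in> ad" "y \<in> ad"
      then obtain c1 p1 c2 p2 where "x = c1 * d + p1" "y = c2 * d + p2" "p1 \<in> P" "p2 \<in> P"
        unfolding ad_def by blast
      then have "x + y = (c1 + c2) * d + (p1 + p2)" "p1 + p2 \<in> P"
        using ideal_add[OF prime_ideal[OF P]] by (auto simp: algebra_simps)
      then show "x + y \<in> ad" unfolding ad_def by blast
    next
      fix r x assume "x \<in> ad"
      then obtain c1 p1 where "x = c1 * d + p1" "p1 \<in> P" unfolding ad_def by blast
      then have "r * x = (r * c1) * d + r * p1" "r * p1 \<in> P"
        using ideal_mult[OF prime_ideal[OF P]] by (auto simp: algebra_simps)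
      then show "r * x \<in> ad" unfolding ad_def by blast
    qed
    have "P \<subseteq> ad"
    proof
      fix p assume "p \<in> P"
      moreover have "p = 0 * d + p" by simp
      ultimately show "p \<in> ad" unfolding ad_def by blast
    qed
    moreover have "d \<in> ad"
    proof -
      have "d = 1 * d + 0" by simp
      then show ?thesis unfolding ad_def using ideal_0[OF prime_ideal[OF P]] by blast
    qed
    ultimately have "P \<subset> ad" using dP by blast
    then have adF: "ad \<in> F" using above_Fstar[OF noeth g Ps adI] by blast
    define W where "W = {smG d w | w. w \<in> V}"
    have Wsub: "is_submodule KG adG zG smG W" unfolding is_submodule_def
    proof (intro conjI ballI allI)
      show "W \<subseteq> KG" unfolding W_def using VK sm_in[OF P] by blast
      show "zG \<in> W" unfolding W_def using zV sm_zero[OF P] by (metis (mono_tags, lifting) mem_Collect_eq)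
    next
      fix a b assume "a \<in> W" "b \<in> W"
      then obtain w1 w2 where "a = smG d w1" "b = smG d w2" "w1 \<in> V" "w2 \<in> V" unfolding W_def by blast
      moreover then have "adG a b = smG d (adG w1 w2)" using sm_add[OF P] VK by auto
      ultimately show "adG a b \<in> W" unfolding W_def using sub_facts[OF P V(1)] by blast
    next
      fix r a assume "a \<in> W"
      then obtain w1 where "a = smG d w1" "w1 \<in> V" unfolding W_def by blast
      moreover then have "smG r a = smG d (smG r w1)" using sm_assoc[OF P] VK
        by (metis mult.commute subsetD)
      ultimately show "smG r a \<in> W" unfolding W_def using sub_facts[OF P V(1)] by blast
    qed
    have gens: "\<forall>r\<in>ad. \<forall>x\<in>V. smG r x \<in> W"
    proof (intro ballI)
      fix r x assume r: "r \<in> ad" and x: "x \<in> V"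
      obtain c p where cp: "r = c * d + p" "p \<in> P" using r unfolding ad_def by blast
      obtain a e where ae: "e \<notin> P" "x = cls P a e" using kappa_cases[of x P] x VK by blast
      have "(c * d + p) * a * e - d * (c * a) * e = p * (a * e)" by (simp add: algebra_simps)
      moreover have "p * (a * e) \<in> P" using cp(2) ideal_mult2[OF prime_ideal[OF P]] by blast
      ultimately have "smG r x = smG d (smG c x)"
        using ae cp by (simp add: smult_cls[OF P] cls_eq_iff[OF P])
      then show "smG r x \<in> W" unfolding W_def using x sub_facts[OF P V(1)] by blast
    qed
    have "V = ideal_times KG adG zG smG ad V" using dv adF unfolding F_divisible_def by blast
    also have "\<dots> \<subseteq> W" unfolding ideal_times_def using Wsub gens by blast
    finally have "y \<in> W" using y by blast
    then obtain w where w: "w \<in> V" "y = smG d w" unfolding W_def by blast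
    obtain c e where ce: "e \<notin> P" "w = cls P c e" using kappa_cases[of w P] w VK by blast
    have "cls P v t = cls P (d * c) e" using w ce vt by (simp add: smult_cls[OF P])
    then have h: "v * e - d * c * t \<in> P" using cls_eq_iff[OF P vt(1) ce(1)] by simp
    have "v * e - d * c * t = v * (1 * e - c * (s * t))" unfolding d_def by (simp add: algebra_simps)
    then have "1 * e - c * (s * t) \<in> P" using h vP P unfolding is_prime_ideal_def by metis
    then have "cls P 1 (s * t) = w" using ce cls_eq_iff[OF P prime_mult[OF P us(1) vt(1)] ce(1)] by simp
    then have w1: "cls P 1 (s * t) \<in> V" using w by simp
    have "smG (u * t) (cls P 1 (s * t)) = cls P (u * t * 1) (s * t)"
      using smult_cls[OF P prime_mult[OF P us(1) vt(1)]] by blast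
    also have "\<dots> = X" unfolding us(2)
      by (rule cls_eqI[OF P prime_mult[OF P us(1) vt(1)] us(1)]) (simp add: algebra_simps)
    finally have "smG (u * t) (cls P 1 (s * t)) = X" .
    then show "X \<in> V" using w1 sub_facts[OF P V(1)] by metis
  qed
  then show False using VK V(3) by blast
qed

end


theorem theorem1p4:
  fixes F :: "'a::comm_ring_1 set set" and P :: "'a set"
  assumes "noetherian_ring TYPE('a)"
    and "local_ring TYPE('a)"
    and "gabriel_topology F"
    and "is_prime_ideal P"
  shows "(simple_F_torsion_free F (kappa P) (kappa_add P) (kappa_zero P) (kappa_smult P)
            \<longleftrightarrow> simple_F_divisible F (kappa P) (kappa_add P) (kappa_zero P) (kappa_smult P))
       \<and> (simple_F_divisible F (kappa P) (kappa_add P) (kappa_zero P) (kappa_smult P)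
            \<longleftrightarrow> P \<in> F_star F)"
proof -
  note noeth = assms(1) and g = assms(3) and P = assms(4)
  have tf: "simple_F_torsion_free F (kappa P) (kappa_add P) (kappa_zero P) (kappa_smult P) \<longleftrightarrow> P \<in> F_star F"
  proof
    assume h: "simple_F_torsion_free F (kappa P) (kappa_add P) (kappa_zero P) (kappa_smult P)"
    have PF: "P \<notin> F" using tf_PnotF[OF P g noeth] h unfolding simple_F_torsion_free_def by blast
    have "Q = P" if Q: "is_prime_ideal Q" "Q \<notin> F" "P \<subseteq> Q" for Q
    proof (rule ccontr)
      assume QP: "Q \<noteq> P"
      show False using h Uq_sub[OF P Q(1) Q(3)] Uq_nonzero[OF P Q(1) Q(3)] Uq_proper[OF P Q(1) Q(3) QP]
          Uq_tf[OF P Q(1) Q(3) g Q(2)] unfolding simple_F_torsion_free_def by blast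
    qed
    then show "P \<in> F_star F" unfolding F_star_def using P PF by blast
  next
    assume st: "P \<in> F_star F"
    then have PF: "P \<notin> F" unfolding F_star_def by blast
    show "simple_F_torsion_free F (kappa P) (kappa_add P) (kappa_zero P) (kappa_smult P)"
      unfolding simple_F_torsion_free_def
      using K_nontriv[OF P] K_tf[OF P g noeth PF] star_simple_tf[OF P g noeth st] by blast
  qed
  have dv: "simple_F_divisible F (kappa P) (kappa_add P) (kappa_zero P) (kappa_smult P) \<longleftrightarrow> P \<in> F_star F"
  proof
    assume h: "simple_F_divisible F (kappa P) (kappa_add P) (kappa_zero P) (kappa_smult P)"
    have PF: "P \<notin> F" using div_PnotF[OF P g noeth] h unfolding simple_F_divisible_def by blast
    have "Q = P" if Q: "is_prime_ideal Q" "Q \<notin> F" "P \<subseteq> Q" for Q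
    proof (rule ccontr)
      assume QP: "Q \<noteq> P"
      show False using h Uq_sub[OF P Q(1) Q(3)] Uq_nonzero[OF P Q(1) Q(3)] Uq_proper[OF P Q(1) Q(3) QP]
          Uq_divisible[OF P Q(1) Q(3) g Q(2)] unfolding simple_F_divisible_def by blast
    qed
    then show "P \<in> F_star F" unfolding F_star_def using P PF by blast
  next
    assume st: "P \<in> F_star F"
    then have PF: "P \<notin> F" unfolding F_star_def by blast
    show "simple_F_divisible F (kappa P) (kappa_add P) (kappa_zero P) (kappa_smult P)"
      unfolding simple_F_divisible_def
      using K_nontriv[OF P] K_div[OF P g noeth PF] star_simple_div[OF P g noeth st] by blast
  qed
  show ?thesis using tf dv by blast
qed


end
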